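(* Let $R$ be an affine algebra over a field $K$ with no zero divisors. If $R$ is not amenable, then $R$ is paradoxical.
   Context: An affine algebra is a finitely generated associative algebra over $K$, not necessarily unital. $R$ is amenable if there exist finite-dimensional $K$-subspaces $W_1\subseteq W_2\subseteq\cdots$ with $\bigcup_nW_n=R$ such that for every $r\in R$, $\lim_{n\to\infty}\dim_K(W_nr+W_n)/\dim_K(W_n)=1$. For $A\subseteq R$, $r\in R$, $Ar=\{ar:a\in A\}$. Subsets $B_1,\dots,B_k$ of $R$ are mutually independent if they are pairwise disjoint and their union is linearly independent over $K$. $R$ (without zero divisors) is paradoxical if every basis $\{f_i\}_{i\ge1}$ of $R$ over $K$ can be written as a disjoint union $A_1\cup\cdots\cup A_m$ such that for some nonzero $g_1,h_1,\dots,g_m,h_m\in R$ the sets $A_1g_1,A_1h_1,\dots,A_mg_m,A_mh_m$ are mutually independent. *)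

theory Defs
  imports Complex_Main
begin

definition algebra_over :: "('k::field \<Rightarrow> 'r::ring \<Rightarrow> 'r) \<Rightarrow> bool" where
  "algebra_over scale \<longleftrightarrow> vector_space scale \<and>
     (\<forall>a x y. scale a (x * y) = scale a x * y \<and> scale a (x * y) = x * scale a y)"

definition subalgebra :: "('k::field \<Rightarrow> 'r::ring \<Rightarrow> 'r) \<Rightarrow> 'r set \<Rightarrow> bool" where
  "subalgebra scale S \<longleftrightarrow> module.subspace scale S \<and> (\<forall>x\<in>S. \<forall>y\<in>S. x * y \<in> S)"

text \<open>Affine: finitely generated as an algebra, i.e. some finite set is
contained in no proper subalgebra.\<close>
definition affine_algebra :: "('k::field \<Rightarrow> 'r::ring \<Rightarrow> 'r) \<Rightarrow> bool" where
  "affine_algebra scale \<longleftrightarrow> algebra_over scale \<and>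
     (\<exists>G. finite G \<and> (\<forall>S. subalgebra scale S \<and> G \<subseteq> S \<longrightarrow> S = UNIV))"

definition no_zero_divisors_alg :: "'r::ring itself \<Rightarrow> bool" where
  "no_zero_divisors_alg _ \<longleftrightarrow> (\<forall>x y::'r. x * y = 0 \<longrightarrow> x = 0 \<or> y = 0)"

definition right_mult_set :: "'r::ring set \<Rightarrow> 'r \<Rightarrow> 'r set" where
  "right_mult_set A r = (\<lambda>a. a * r) ` A"

definition amenable :: "('k::field \<Rightarrow> 'r::ring \<Rightarrow> 'r) \<Rightarrow> bool" where
  "amenable scale \<longleftrightarrow>
     (\<exists>W :: nat \<Rightarrow> 'r set.
        (\<forall>n. module.subspace scale (W n) \<and> (\<exists>B. finite B \<and> module.span scale B = W n)) \<and>
        (\<forall>n. W n \<subseteq> W (Suc n)) \<and>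
        (\<Union>n. W n) = UNIV \<and>
        (\<forall>r. (\<lambda>n. real (vector_space.dim scale
                     {x + y | x y. x \<in> right_mult_set (W n) r \<and> y \<in> W n})
                   / real (vector_space.dim scale (W n))) \<longlonglongrightarrow> 1))"

definition mutually_independent ::
    "('k::field \<Rightarrow> 'r::ring \<Rightarrow> 'r) \<Rightarrow> 'i set \<Rightarrow> ('i \<Rightarrow> 'r set) \<Rightarrow> bool" where
  "mutually_independent scale I B \<longleftrightarrow>
     (\<forall>i\<in>I. \<forall>j\<in>I. i \<noteq> j \<longrightarrow> B i \<inter> B j = {}) \<and>
     module.independent scale (\<Union>i\<in>I. B i)"

definition paradoxical :: "('k::field \<Rightarrow> 'r::ring \<Rightarrow> 'r) \<Rightarrow> bool" where
  "paradoxical scale \<longleftrightarrow>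
     (\<forall>F :: 'r set. module.independent scale F \<and> module.span scale F = UNIV \<longrightarrow>
        (\<exists>(m::nat) (A :: nat \<Rightarrow> 'r set) (g :: nat \<Rightarrow> 'r) (h :: nat \<Rightarrow> 'r).
           F = (\<Union>i<m. A i) \<and>
           (\<forall>i<m. \<forall>j<m. i \<noteq> j \<longrightarrow> A i \<inter> A j = {}) \<and>
           (\<forall>i<m. g i \<noteq> 0 \<and> h i \<noteq> 0) \<and>
           mutually_independent scale ({..<m} \<times> UNIV)
             (\<lambda>(i, b). if b then right_mult_set (A i) (g i) else right_mult_set (A i) (h i))))"

end

theory Submission
  imports Defs "HOL-Library.Countable_Set"
begin


context vector_space begin


lemma basis_fin:
  assumes "finite W"
  obtains B where "B \<subseteq> W" "independent B" "W \<subseteq> span B" "card B = dim W" "finite B"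
proof -
  obtain B where B: "B \<subseteq> W" "independent B" "W \<subseteq> span B" "card B = dim W"
    using basis_exists by blast
  have "finite B" using B(1) assms finite_subset by blast
  with B that show ?thesis by blast
qed

lemma dim_le_fin:
  assumes "finite W" "V \<subseteq> span W"
  shows "dim V \<le> dim W"
proof -
  obtain B where B: "B \<subseteq> V" "independent B" "V \<subseteq> span B" "card B = dim V"
    using basis_exists by blast
  obtain C where C: "C \<subseteq> W" "independent C" "W \<subseteq> span C" "card C = dim W" "finite C"
    using basis_fin[OF assms(1)] by blast
  have "span W \<subseteq> span C" using C(3) by (simp add: span_minimal)
  then have "B \<subseteq> span C" using B(1) assms(2) by blast
  then have "card B \<le> card C" using independent_span_bound[OF C(5) B(2)] by blast
  then show ?thesis using B C by simp
qed

lemma dim_sub_fin: "finite T \<Longrightarrow> S \<subseteq> T \<Longrightarrow> dim S \<le> dim T"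
  using dim_le_fin span_superset by blast

lemma dim_union_le:
  assumes "finite P" "finite Q"
  shows "dim (P \<union> Q) \<le> dim P + dim Q"
proof -
  obtain B where B: "B \<subseteq> P" "independent B" "P \<subseteq> span B" "card B = dim P" "finite B"
    using basis_fin[OF assms(1)] by blast
  obtain C where C: "C \<subseteq> Q" "independent C" "Q \<subseteq> span C" "card C = dim Q" "finite C"
    using basis_fin[OF assms(2)] by blast
  have "P \<union> Q \<subseteq> span (B \<union> C)" using B(3) C(3) span_mono[of B "B \<union> C"] span_mono[of C "B \<union> C"] by blast
  then have "dim (P \<union> Q) \<le> card (B \<union> C)" using dim_le_card B(5) C(5) by blast
  also have "\<dots> \<le> card B + card C" by (rule card_Un_le)
  finally show ?thesis using B C by simp
qed

lemma dim_submod: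
  assumes "finite P" "finite Q"
  shows "dim (P \<union> Q) + dim (P \<inter> Q) \<le> dim P + dim Q"
proof -
  obtain B0 where B0: "B0 \<subseteq> P \<inter> Q" "independent B0" "P \<inter> Q \<subseteq> span B0" "card B0 = dim (P \<inter> Q)"
    using basis_exists by blast
  obtain B1 where B1: "B0 \<subseteq> B1" "B1 \<subseteq> P" "independent B1" "P \<subseteq> span B1"
    using maximal_independent_subset_extend[of B0 P] B0 by blast
  obtain B2 where B2: "B0 \<subseteq> B2" "B2 \<subseteq> Q" "independent B2" "Q \<subseteq> span B2"
    using maximal_independent_subset_extend[of B0 Q] B0 by blast
  have f1: "finite B1" using B1(2) assms(1) finite_subset by blast
  have f2: "finite B2" using B2(2) assms(2) finite_subset by blast
  have c1: "card B1 = dim P" using basis_card_eq_dim B1 by blast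
  have c2: "card B2 = dim Q" using basis_card_eq_dim B2 by blast
  have "P \<union> Q \<subseteq> span (B1 \<union> B2)" using B1(4) B2(4) span_mono[of B1 "B1 \<union> B2"] span_mono[of B2 "B1 \<union> B2"] by blast
  then have "dim (P \<union> Q) \<le> card (B1 \<union> B2)" using dim_le_card f1 f2 by blast
  moreover have "card (B1 \<union> B2) + card (B1 \<inter> B2) = card B1 + card B2"
    using card_Un_Int[OF f1 f2] by simp
  moreover have "card B0 \<le> card (B1 \<inter> B2)" using B1(1) B2(1) f1 by (intro card_mono) auto
  ultimately show ?thesis using c1 c2 B0(4) by linarith
qed

lemma dim_insert_fin:
  assumes "finite S" "x \<notin> span S"
  shows "dim (insert x S) = dim S + 1"
proof -
  obtain B where B: "B \<subseteq> S" "independent B" "S \<subseteq> span B" "card B = dim S" "finite B"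
    using basis_fin[OF assms(1)] by blast
  have sp: "span B = span S" using B(1,3) by (simp add: span_eq span_superset subset_trans)
  have xB: "x \<notin> span B" using sp assms(2) by simp
  have "x \<notin> B" using xB span_superset by blast
  have "span (insert x B) = span (insert x S)" using sp by (simp add: span_insert)
  then have "dim (insert x S) = card (insert x B)"
    using dim_eq_card[of "insert x B" "insert x S"] independent_insertI[OF xB B(2)] by simp
  then show ?thesis using B(4,5) \<open>x \<notin> B\<close> by simp
qed

lemma independent_finite_subsets:
  assumes "\<And>S. S \<subseteq> A \<Longrightarrow> finite S \<Longrightarrow> independent S"
  shows "independent A"
proof
  assume "dependent A"
  then obtain T u v where "finite T" "T \<subseteq> A" "v \<in> T" "u v \<noteq> 0" "(\<Sum>v\<in>T. u v *s v) = 0"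
    by (force simp: dependent_explicit)
  then have "dependent T" by (force simp: dependent_explicit)
  then show False using assms \<open>finite T\<close> \<open>T \<subseteq> A\<close> by blast
qed


end



definition hallc :: "('a::field \<Rightarrow> 'b::ab_group_add \<Rightarrow> 'b) \<Rightarrow> 'i set \<Rightarrow> ('i \<Rightarrow> 'b set) \<Rightarrow> bool" where
  "hallc sc I X \<longleftrightarrow> (\<forall>J. J \<subseteq> I \<longrightarrow> finite J \<longrightarrow> card J \<le> vector_space.dim sc (\<Union>(X ` J)))"

context vector_space begin

lemma rado_remove:
  fixes X :: "'i \<Rightarrow> 'b set"
  assumes H: "hallc scale I X" and fin: "\<And>i. i \<in> I \<Longrightarrow> finite (X i)" and j: "j \<in> I"
    and x: "x1 \<in> X j" "x2 \<in> X j" "x1 \<noteq> x2"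
  shows "hallc scale I (X(j := X j - {x1})) \<or> hallc scale I (X(j := X j - {x2}))"
proof (rule ccontr)
  assume "\<not> ?thesis"
  then obtain J1 J2 where J1: "J1 \<subseteq> I" "finite J1" "card J1 > dim (\<Union>((X(j := X j - {x1})) ` J1))"
    and J2: "J2 \<subseteq> I" "finite J2" "card J2 > dim (\<Union>((X(j := X j - {x2})) ` J2))"
    unfolding hallc_def by (auto simp: not_le)
  define P where "P = \<Union>((X(j := X j - {x1})) ` J1)"
  define Q where "Q = \<Union>((X(j := X j - {x2})) ` J2)"
  have jJ1: "j \<in> J1"
  proof (rule ccontr)
    assume "j \<notin> J1"
    then have "\<Union>((X(j := X j - {x1})) ` J1) = \<Union>(X ` J1)" by auto
    moreover have "card J1 \<le> dim (\<Union>(X ` J1))" by (rule H[unfolded hallc_def, rule_format]) (use J1 in auto)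
    ultimately show False using J1(3) by simp
  qed
  have jJ2: "j \<in> J2"
  proof (rule ccontr)
    assume "j \<notin> J2"
    then have "\<Union>((X(j := X j - {x2})) ` J2) = \<Union>(X ` J2)" by auto
    moreover have "card J2 \<le> dim (\<Union>(X ` J2))" by (rule H[unfolded hallc_def, rule_format]) (use J2 in auto)
    ultimately show False using J2(3) by simp
  qed
  have fP: "finite P" unfolding P_def using J1 fin by (auto intro!: finite_Union)
  have fQ: "finite Q" unfolding Q_def using J2 fin by (auto intro!: finite_Union)
  have sub1: "\<Union>(X ` (J1 \<union> J2)) \<subseteq> P \<union> Q"
  proof
    fix y assume "y \<in> \<Union>(X ` (J1 \<union> J2))"
    then obtain i where i: "i \<in> J1 \<union> J2" "y \<in> X i" by blast
    show "y \<in> P \<union> Q"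
    proof (cases "i = j")
      case True
      then show ?thesis using i x jJ1 jJ2 unfolding P_def Q_def
        by (cases "y = x1") auto
    next
      case False
      then show ?thesis using i unfolding P_def Q_def by auto
    qed
  qed
  have sub2: "\<Union>(X ` (J1 \<inter> J2 - {j})) \<subseteq> P \<inter> Q"
    unfolding P_def Q_def by auto
  have "card (J1 \<union> J2) \<le> dim (\<Union>(X ` (J1 \<union> J2)))"
    by (rule H[unfolded hallc_def, rule_format]) (use J1 J2 in auto)
  also have "\<dots> \<le> dim (P \<union> Q)" using dim_sub_fin[OF _ sub1] fP fQ by simp
  finally have h1: "card (J1 \<union> J2) \<le> dim (P \<union> Q)" .
  have "card (J1 \<inter> J2 - {j}) \<le> dim (\<Union>(X ` (J1 \<inter> J2 - {j})))"
    by (rule H[unfolded hallc_def, rule_format]) (use J1 J2 in auto)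
  also have "\<dots> \<le> dim (P \<inter> Q)" using dim_sub_fin[OF _ sub2] fP by simp
  finally have h2: "card (J1 \<inter> J2 - {j}) \<le> dim (P \<inter> Q)" .
  have c: "card (J1 \<union> J2) + card (J1 \<inter> J2) = card J1 + card J2"
    using card_Un_Int[OF J1(2) J2(2)] by simp
  have c2: "card (J1 \<inter> J2 - {j}) + 1 = card (J1 \<inter> J2)"
  proof -
    have "j \<in> J1 \<inter> J2" "finite (J1 \<inter> J2)" using jJ1 jJ2 J1(2) by auto
    moreover have "card (J1 \<inter> J2) > 0" using calculation card_gt_0_iff by blast
    ultimately show ?thesis by (simp add: card_Diff_singleton)
  qed
  have "dim (P \<union> Q) + dim (P \<inter> Q) \<le> dim P + dim Q" using dim_submod[OF fP fQ] .
  then show False using h1 h2 c c2 J1(3)[folded P_def] J2(3)[folded Q_def] by linarith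
qed

lemma rado_single:
  fixes X :: "'i \<Rightarrow> 'b set"
  assumes "hallc scale I X" "\<And>i. i \<in> I \<Longrightarrow> finite (X i)" "j \<in> I"
  shows "\<exists>y \<in> X j. hallc scale I (X(j := {y}))"
  using assms
proof (induction "card (X j)" arbitrary: X rule: less_induct)
  case less
  show ?case
  proof (cases "card (X j) \<le> 1")
    case True
    have "card {j} \<le> dim (\<Union>(X ` {j}))"
      by (rule less.prems(1)[unfolded hallc_def, rule_format]) (use less.prems(3) in auto)
    then have "1 \<le> dim (X j)" by simp
    have "X j \<noteq> {}"
    proof
      assume "X j = {}"
      then show False using dim_le_card[of "{}" "{}"] \<open>1 \<le> dim (X j)\<close> by simp
    qed
    moreover have "finite (X j)" using less.prems(2)[OF less.prems(3)] .
    ultimately have "card (X j) > 0" by (simp add: card_gt_0_iff)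
    then have "card (X j) = 1" using True by linarith
    then obtain y where y: "X j = {y}" by (auto simp: card_1_singleton_iff)
    have "X(j := {y}) = X" by (rule fun_upd_idem) (rule y)
    then have "hallc scale I (X(j := {y}))" using less.prems(1) by simp
    then show ?thesis using y by simp
  next
    case False
    then obtain x1 x2 where x: "x1 \<in> X j" "x2 \<in> X j" "x1 \<noteq> x2"
      using card_le_Suc0_iff_eq[OF less.prems(2)[OF less.prems(3)]] by auto
    obtain x where xx: "x \<in> X j" "hallc scale I (X(j := X j - {x}))"
      using rado_remove[OF less.prems(1,2,3) x] x by blast
    let ?X = "X(j := X j - {x})"
    have "card (?X j) < card (X j)" using card_Diff1_less[OF less.prems(2)[OF less.prems(3)] xx(1)]
      by simp
    then obtain y where "y \<in> ?X j" "hallc scale I (?X(j := {y}))"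
      using less.hyps[of ?X] xx less.prems by fastforce
    then show ?thesis by auto
  qed
qed

lemma card_le_dim_imp:
  assumes "finite J" "card J \<le> dim (x ` J)"
  shows "inj_on x J \<and> independent (x ` J)"
proof -
  have f: "finite (x ` J)" using assms(1) by simp
  have "dim (x ` J) \<le> card (x ` J)" using dim_le_card'[OF f] .
  moreover have "card (x ` J) \<le> card J" using card_image_le[OF assms(1)] .
  ultimately have c: "card (x ` J) = card J" "dim (x ` J) = card (x ` J)" using assms(2) by linarith+
  have inj: "inj_on x J" using eq_card_imp_inj_on[OF assms(1) c(1)] .
  obtain B where B: "B \<subseteq> x ` J" "independent B" "x ` J \<subseteq> span B" "card B = dim (x ` J)"
    using basis_exists by blast
  have "B = x ` J" using card_subset_eq[OF f B(1)] B(4) c(2) by simp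
  then show ?thesis using inj B(2) by simp
qed

lemma rado_countable:
  fixes X :: "'i \<Rightarrow> 'b set"
  assumes cI: "countable I" and H: "hallc scale I X" and fin: "\<And>i. i \<in> I \<Longrightarrow> finite (X i)"
  shows "\<exists>x. (\<forall>i\<in>I. x i \<in> X i) \<and> inj_on x I \<and> independent (x ` I)"
proof (cases "I = {}")
  case True
  then show ?thesis using independent_empty by auto
next
  case False
  define e where "e = from_nat_into I"
  have eI: "e n \<in> I" for n using from_nat_into[OF False] e_def by simp
  define sel where "sel Z i = (SOME y. y \<in> Z i \<and> hallc scale I (Z(i := {y})))" for Z :: "'i \<Rightarrow> 'b set" and i
  define step where "step n Z = Z(e n := {sel Z (e n)})" for n Z
  define Y where "Y = rec_nat X step"
  have Y0: "Y 0 = X" and YS: "Y (Suc n) = step n (Y n)" for n unfolding Y_def by simp_all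
  define inv where "inv Z \<longleftrightarrow> hallc scale I Z \<and> (\<forall>i\<in>I. finite (Z i)) \<and> (\<forall>i. Z i \<subseteq> X i)"
    for Z :: "'i \<Rightarrow> 'b set"
  have sel: "sel Z i \<in> Z i \<and> hallc scale I (Z(i := {sel Z i}))" if "inv Z" "i \<in> I" for Z i
  proof -
    have "\<exists>y \<in> Z i. hallc scale I (Z(i := {y}))"
      using rado_single[of I Z i] that unfolding inv_def by blast
    then have "\<exists>y. y \<in> Z i \<and> hallc scale I (Z(i := {y}))" by blast
    from someI_ex[OF this] show ?thesis unfolding sel_def .
  qed
  have inv_step: "inv (step n Z)" if "inv Z" for n Z
  proof -
    have s: "sel Z (e n) \<in> Z (e n)" "hallc scale I (Z(e n := {sel Z (e n)}))" using sel[OF that eI] by auto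
    show ?thesis using that s unfolding inv_def step_def by auto
  qed
  have invY: "inv (Y n)" for n
    by (induction n) (auto simp: Y0 YS inv_step, use H fin in \<open>auto simp: inv_def\<close>)
  have sel_single: "sel Z i = c" if "inv Z" "i \<in> I" "Z i = {c}" for Z i c
    using sel[OF that(1,2)] that(3) by auto
  have stab: "Y (Suc k + m) (e k) = Y (Suc k) (e k)" for k m
  proof (induction m)
    case 0 then show ?case by simp
  next
    case (Suc m)
    have "Y (Suc k) (e k) = {sel (Y k) (e k)}" by (simp add: YS step_def)
    then have Ym: "Y (Suc k + m) (e k) = {sel (Y k) (e k)}" using Suc by simp
    have "Y (Suc k + Suc m) = step (Suc k + m) (Y (Suc k + m))" by (simp add: YS[symmetric])
    then have "Y (Suc k + Suc m) (e k) = Y (Suc k + m) (e k)"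
      using sel_single[OF invY eI Ym] Ym unfolding step_def by auto
    then show ?case using Suc by simp
  qed
  define kk where "kk i = (SOME k. e k = i)" for i
  have kk: "e (kk i) = i" if "i \<in> I" for i
    unfolding kk_def e_def by (rule someI_ex) (use from_nat_into_surj[OF cI that] in auto)
  define x where "x i = the_elem (Y (Suc (kk i)) i)" for i
  have Ysing: "Y (Suc k) (e k) = {sel (Y k) (e k)}" for k by (simp add: YS step_def)
  have xY: "Y (Suc (kk i) + m) i = {x i}" if "i \<in> I" for i m
    using stab[of "kk i" m] Ysing[of "kk i"] kk[OF that] unfolding x_def by simp
  have fin_good: "inj_on x J \<and> independent (x ` J)" if J: "J \<subseteq> I" "finite J" for J
  proof -
    define N where "N = Suc (Max (insert 0 (kk ` J)))"
    have "Y N i = {x i}" if "i \<in> J" for i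
    proof -
      have "kk i \<le> Max (insert 0 (kk ` J))" using J(2) that by (intro Max_ge) auto
      then have "N = Suc (kk i) + (Max (insert 0 (kk ` J)) - kk i)" unfolding N_def by simp
      then show ?thesis using xY[of i] that J(1) by auto
    qed
    then have eq: "\<Union>(Y N ` J) = x ` J" by auto
    have "card J \<le> dim (\<Union>(Y N ` J))"
      using invY[of N] J unfolding inv_def hallc_def by blast
    then show ?thesis using card_le_dim_imp[OF J(2)] eq by simp
  qed
  have "x i \<in> X i" if "i \<in> I" for i
    using xY[of i 0] invY[of "Suc (kk i)"] that unfolding inv_def by auto
  moreover have "inj_on x I"
  proof (rule inj_onI)
    fix a b assume "a \<in> I" "b \<in> I" "x a = x b"
    then show "a = b" using fin_good[of "{a, b}"] by (auto dest: inj_onD)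
  qed
  moreover have "independent (x ` I)"
  proof (rule independent_finite_subsets)
    fix S assume "S \<subseteq> x ` I" "finite S"
    then obtain J where "J \<subseteq> I" "finite J" "S = x ` J" by (meson finite_subset_image)
    then show "independent S" using fin_good by blast
  qed
  ultimately show ?thesis by blast
qed

end



definition prods :: "'r::ring set \<Rightarrow> 'r set \<Rightarrow> 'r set" where
  "prods A T = {a * t | a t. a \<in> A \<and> t \<in> T}"

lemma prods_mono: "A \<subseteq> A' \<Longrightarrow> T \<subseteq> T' \<Longrightarrow> prods A T \<subseteq> prods A' T'"
  unfolding prods_def by blast

lemma prods_Un1: "prods (A \<union> B) T = prods A T \<union> prods B T"
  unfolding prods_def by blast

lemma finite_prods: "finite A \<Longrightarrow> finite T \<Longrightarrow> finite (prods A T)"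
proof -
  assume "finite A" "finite T"
  then have "finite ((\<lambda>(a, t). a * t) ` (A \<times> T))" by simp
  moreover have "prods A T = (\<lambda>(a, t). a * t) ` (A \<times> T)" unfolding prods_def by auto
  ultimately show ?thesis by simp
qed

primrec Mset :: "'r::ring set \<Rightarrow> nat \<Rightarrow> 'r set" where
  "Mset G 0 = G"
| "Mset G (Suc n) = Mset G n \<union> prods (Mset G n) G"

lemma finite_Mset: "finite G \<Longrightarrow> finite (Mset G n)"
  by (induction n) (auto simp: finite_prods)

lemma Mset_mono: "m \<le> n \<Longrightarrow> Mset G m \<subseteq> Mset G n"
  by (rule lift_Suc_mono_le[of "Mset G"]) auto

lemma G_Mset: "G \<subseteq> Mset G n"
  using Mset_mono[of 0 n G] by simp

lemma Mset_prod: "a \<in> Mset G m \<Longrightarrow> b \<in> Mset G n \<Longrightarrow> a * b \<in> Mset G (m + n + 1)"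
proof (induction n arbitrary: b)
  case 0
  then have "a * b \<in> prods (Mset G m) G" unfolding prods_def by auto
  then show ?case by simp
next
  case (Suc n)
  from Suc.prems(2) have "b \<in> Mset G n \<union> prods (Mset G n) G" by simp
  then have "b \<in> Mset G n \<or> (\<exists>y g. y \<in> Mset G n \<and> g \<in> G \<and> b = y * g)"
    unfolding prods_def by blast
  then show ?case
  proof
    assume "b \<in> Mset G n"
    then have "a * b \<in> Mset G (m + n + 1)" using Suc by blast
    then show ?thesis using Mset_mono[of "m + n + 1" "m + Suc n + 1" G] by auto
  next
    assume "\<exists>y g. y \<in> Mset G n \<and> g \<in> G \<and> b = y * g"
    then obtain y g where yg: "y \<in> Mset G n" "g \<in> G" "b = y * g" by blast
    have "a * y \<in> Mset G (m + n + 1)" using Suc yg by blast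
    then have "(a * y) * g \<in> prods (Mset G (m + n + 1)) G" using yg unfolding prods_def by blast
    then have "(a * y) * g \<in> Mset G (Suc (m + n + 1))" by (simp only: Mset.simps) blast
    then show ?thesis using yg by (simp add: mult.assoc)
  qed
qed

primrec Sq :: "'r::ring set \<Rightarrow> nat \<Rightarrow> 'r set" where
  "Sq T 0 = {}"
| "Sq T (Suc j) = T \<union> Sq T j \<union> prods (Sq T j) T"

lemma finite_Sq: "finite T \<Longrightarrow> finite (Sq T j)"
  by (induction j) (auto simp: finite_prods)

lemma prods_assoc: "prods (prods X S) T \<subseteq> prods X (prods S T)"
proof
  fix z assume "z \<in> prods (prods X S) T"
  then obtain x s t where "x \<in> X" "s \<in> S" "t \<in> T" "z = (x * s) * t" unfolding prods_def by blast
  then show "z \<in> prods X (prods S T)" unfolding prods_def by (auto simp: mult.assoc)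
qed

lemma iter_sub: "((\<lambda>Y. Y \<union> prods Y T) ^^ j) X \<subseteq> X \<union> prods X (Sq T j)"
proof (induction j)
  case 0 then show ?case by simp
next
  case (Suc j)
  let ?e = "\<lambda>Y. Y \<union> prods Y T"
  have "(?e ^^ Suc j) X = ?e ((?e ^^ j) X)" by simp
  also have "\<dots> \<subseteq> ?e (X \<union> prods X (Sq T j))" using Suc prods_mono[of "(?e ^^ j) X" "X \<union> prods X (Sq T j)" T T] by blast
  also have "\<dots> = X \<union> prods X (Sq T j) \<union> prods X T \<union> prods (prods X (Sq T j)) T" by (simp add: prods_Un1 Un_assoc)
  also have "\<dots> \<subseteq> X \<union> prods X (Sq T (Suc j))"
  proof -
    have "prods X (Sq T j) \<subseteq> prods X (Sq T (Suc j))" by (rule prods_mono) auto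
    moreover have "prods X T \<subseteq> prods X (Sq T (Suc j))" by (rule prods_mono) auto
    moreover have "prods (prods X (Sq T j)) T \<subseteq> prods X (Sq T (Suc j))"
      using prods_assoc[of X "Sq T j" T] prods_mono[of X X "prods (Sq T j) T" "Sq T (Suc j)"] by auto
    ultimately show ?thesis by blast
  qed
  finally show ?case .
qed

locale alg = vector_space scale for scale :: "'k::field \<Rightarrow> 'r::ring \<Rightarrow> 'r" +
  assumes ml: "scale a (x * y) = scale a x * y" and mr: "scale a (x * y) = x * scale a y"
begin

lemma rmult_span: "x \<in> span S \<Longrightarrow> x * t \<in> span ((\<lambda>s. s * t) ` S)"
proof (induction rule: span_induct_alt)
  case base then show ?case by (simp add: span_zero)
next
  case (step c x y)
  have "(scale c x + y) * t = scale c (x * t) + y * t" by (simp add: distrib_right ml)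
  moreover have "scale c (x * t) \<in> span ((\<lambda>s. s * t) ` S)"
    using step by (intro span_scale span_base) auto
  ultimately show ?case using step span_add by auto
qed

lemma lmult_span: "x \<in> span S \<Longrightarrow> w * x \<in> span ((\<lambda>s. w * s) ` S)"
proof (induction rule: span_induct_alt)
  case base then show ?case by (simp add: span_zero)
next
  case (step c x y)
  have "w * (scale c x + y) = scale c (w * x) + w * y" by (simp add: distrib_left mr)
  moreover have "scale c (w * x) \<in> span ((\<lambda>s. w * s) ` S)"
    using step by (intro span_scale span_base) auto
  ultimately show ?case using step span_add by auto
qed

lemma prod_span: "x \<in> span A \<Longrightarrow> y \<in> span B \<Longrightarrow> x * y \<in> span (prods A B)"
proof -
  assume x: "x \<in> span A" and y: "y \<in> span B"
  have "x * y \<in> span ((\<lambda>b. x * b) ` B)" using lmult_span[OF y] .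
  moreover have "(\<lambda>b. x * b) ` B \<subseteq> span (prods A B)"
  proof
    fix z assume "z \<in> (\<lambda>b. x * b) ` B"
    then obtain b where b: "b \<in> B" "z = x * b" by blast
    have "(\<lambda>s. s * b) ` A \<subseteq> prods A B" using b unfolding prods_def by blast
    then have "span ((\<lambda>s. s * b) ` A) \<subseteq> span (prods A B)" by (rule span_mono)
    then show "z \<in> span (prods A B)" using rmult_span[OF x, of b] b by blast
  qed
  then have "span ((\<lambda>b. x * b) ` B) \<subseteq> span (prods A B)" by (simp add: span_minimal)
  ultimately show ?thesis by blast
qed

lemma prods_span_sub: "prods (span A) (span B) \<subseteq> span (prods A B)"
proof
  fix z assume "z \<in> prods (span A) (span B)"
  then obtain x y where "x \<in> span A" "y \<in> span B" "z = x * y" unfolding prods_def by blast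
  then show "z \<in> span (prods A B)" using prod_span by simp
qed

definition fd :: bool where "fd \<longleftrightarrow> (\<exists>B. finite B \<and> span B = UNIV)"

lemma dim_pos_ex: "finite X \<Longrightarrow> 0 < dim X \<Longrightarrow> \<exists>x\<in>X. x \<noteq> 0"
proof (rule ccontr)
  assume "finite X" "0 < dim X" "\<not> (\<exists>x\<in>X. x \<noteq> 0)"
  then have "X \<subseteq> {0}" by blast
  then have "X \<subseteq> span {}" by simp
  then have "dim X \<le> 0" using dim_le_card[of X "{}"] by simp
  then show False using \<open>0 < dim X\<close> by simp
qed

lemma invariant_all:
  assumes G: "\<And>S. subalgebra scale S \<Longrightarrow> G \<subseteq> S \<Longrightarrow> S = UNIV"
    and inv: "prods (span X) G \<subseteq> span X"
  shows "prods (span X) UNIV \<subseteq> span X"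
proof -
  define Q where "Q = {r. \<forall>w\<in>span X. w * r \<in> span X}"
  have "subalgebra scale Q"
    unfolding subalgebra_def
  proof
    show "subspace Q"
    proof (rule subspaceI)
      show "0 \<in> Q" unfolding Q_def by (simp add: span_zero)
      show "x + y \<in> Q" if "x \<in> Q" "y \<in> Q" for x y
        using that unfolding Q_def by (simp add: distrib_left span_add)
      show "scale c x \<in> Q" if "x \<in> Q" for c x
        using that unfolding Q_def by (simp add: mr[symmetric] span_scale)
    qed
    show "\<forall>x\<in>Q. \<forall>y\<in>Q. x * y \<in> Q"
      unfolding Q_def by (simp add: mult.assoc[symmetric])
  qed
  moreover have "G \<subseteq> Q" using inv unfolding Q_def prods_def by blast
  ultimately have "Q = UNIV" using G by blast
  then show ?thesis unfolding Q_def prods_def by blast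
qed

lemma fd_if_inj:
  assumes w: "\<And>r. w * r \<in> span X" and inj: "\<And>r. w * r = 0 \<Longrightarrow> r = 0" and fX: "finite X"
  shows fd
proof -
  obtain B where B0: "B \<subseteq> UNIV" "independent B" "UNIV \<subseteq> span B"
    using maximal_independent_subset[of UNIV] by blast
  then have B: "independent B" "span B = UNIV" by auto
  have hom: "module_hom scale scale (\<lambda>r. w * r)"
    unfolding module_hom_iff using module_axioms by (simp add: distrib_left mr)
  have "inj_on (\<lambda>r. w * r) (span B)"
  proof (rule inj_onI)
    fix a b assume "w * a = w * b"
    then have "w * (a - b) = 0" by (simp add: right_diff_distrib)
    then show "a = b" using inj[of "a - b"] by simp
  qed
  then have "independent ((\<lambda>r. w * r) ` B)"
    using module_hom.independent_injective_image[OF hom B(1)] by simp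
  moreover have "(\<lambda>r. w * r) ` B \<subseteq> span X" using w by blast
  ultimately have "finite ((\<lambda>r. w * r) ` B)" using independent_span_bound[OF fX] by blast
  moreover have "inj_on (\<lambda>r. w * r) B" using \<open>inj_on _ (span B)\<close> span_superset inj_on_subset by blast
  ultimately have "finite B" using finite_imageD by blast
  then show fd unfolding fd_def using B by blast
qed

lemma expand_one:
  assumes G: "\<And>S. subalgebra scale S \<Longrightarrow> G \<subseteq> S \<Longrightarrow> S = UNIV"
    and nzd: "\<And>x y :: 'r. x * y = 0 \<Longrightarrow> x = 0 \<or> y = 0"
    and nfd: "\<not> fd" and GT: "G \<subseteq> T" and fX: "finite X" and fT: "finite T" and d: "0 < dim X"
  shows "dim X + 1 \<le> dim (X \<union> prods X T)"
proof -
  have "\<not> prods X T \<subseteq> span X"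
  proof
    assume a: "prods X T \<subseteq> span X"
    have "prods (span X) G \<subseteq> span X"
    proof -
      have "prods (span X) G \<subseteq> prods (span X) (span G)" by (rule prods_mono) (auto intro: span_base)
      also have "\<dots> \<subseteq> span (prods X G)" by (rule prods_span_sub)
      also have "\<dots> \<subseteq> span (prods X T)" using GT by (intro span_mono prods_mono) auto
      also have "\<dots> \<subseteq> span X" using a by (simp add: span_minimal)
      finally show ?thesis .
    qed
    then have all: "prods (span X) UNIV \<subseteq> span X" using invariant_all G by blast
    obtain w where w: "w \<in> X" "w \<noteq> 0" using dim_pos_ex[OF fX d] by blast
    have "w * r \<in> span X" for r using all w(1) span_superset unfolding prods_def by blast
    moreover have "w * r = 0 \<Longrightarrow> r = 0" for r using nzd[of w r] w(2) by blast
    ultimately have fd using fd_if_inj fX by blast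
    then show False using nfd by simp
  qed
  then obtain y where y: "y \<in> prods X T" "y \<notin> span X" by blast
  have "dim (insert y X) = dim X + 1" by (rule dim_insert_fin[OF fX y(2)])
  moreover have "dim (insert y X) \<le> dim (X \<union> prods X T)"
    using y(1) fX fT by (intro dim_sub_fin) (auto simp: finite_prods)
  ultimately show ?thesis by simp
qed

lemma dim_mono_gen:
  assumes "S \<subseteq> T" "T \<subseteq> span W" "finite W"
  shows "dim S \<le> dim T"
proof -
  obtain C where C: "C \<subseteq> T" "independent C" "T \<subseteq> span C" "card C = dim T"
    using basis_exists by blast
  have fC: "finite C" using independent_span_bound[OF assms(3) C(2)] C(1) assms(2) by blast
  have "dim S \<le> dim C" using dim_le_fin[OF fC] assms(1) C(3) by blast
  also have "dim C = card C" using dim_eq_card_independent[OF C(2)] .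
  finally show ?thesis using C(4) by simp
qed

lemma Mset_exhaust:
  assumes G: "\<And>S. subalgebra scale S \<Longrightarrow> G \<subseteq> S \<Longrightarrow> S = UNIV"
  shows "\<exists>n. r \<in> span (Mset G n)"
proof -
  define S where "S = (\<Union>n. span (Mset G n))"
  have mono: "span (Mset G m) \<subseteq> span (Mset G n)" if "m \<le> n" for m n
    using Mset_mono[OF that] by (rule span_mono)
  have "subalgebra scale S"
    unfolding subalgebra_def
  proof
    show "subspace S"
    proof (rule subspaceI)
      show "0 \<in> S" unfolding S_def using span_zero by blast
      show "x + y \<in> S" if xy: "x \<in> S" "y \<in> S" for x y
      proof -
        obtain a b where "x \<in> span (Mset G a)" "y \<in> span (Mset G b)" using xy unfolding S_def by blast
        then have "x \<in> span (Mset G (max a b))" "y \<in> span (Mset G (max a b))"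
          using mono[of a "max a b"] mono[of b "max a b"] by auto
        then show ?thesis unfolding S_def using span_add by blast
      qed
      show "scale c x \<in> S" if "x \<in> S" for c x
        using that span_scale unfolding S_def by blast
    qed
    show "\<forall>x\<in>S. \<forall>y\<in>S. x * y \<in> S"
    proof (intro ballI)
      fix x y assume "x \<in> S" "y \<in> S"
      then obtain a b where ab: "x \<in> span (Mset G a)" "y \<in> span (Mset G b)" unfolding S_def by blast
      have "x * y \<in> span (prods (Mset G a) (Mset G b))" using prod_span[OF ab] .
      moreover have "prods (Mset G a) (Mset G b) \<subseteq> Mset G (a + b + 1)"
        unfolding prods_def using Mset_prod by blast
      ultimately have "x * y \<in> span (Mset G (a + b + 1))" using span_mono by blast
      then show "x * y \<in> S" unfolding S_def by blast
    qed
  qed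
  moreover have "G \<subseteq> S" unfolding S_def using G_Mset[of G 0] span_superset by blast
  ultimately have "S = UNIV" using G by blast
  then show ?thesis unfolding S_def by blast
qed

lemma ratio_bounds:
  assumes fB: "finite B" and d: "0 < dim B" and r: "r \<in> span T" and fT: "finite T"
  shows "dim B \<le> dim {x + y | x y. x \<in> right_mult_set (span B) r \<and> y \<in> span B}"
    and "dim {x + y | x y. x \<in> right_mult_set (span B) r \<and> y \<in> span B} \<le> dim (B \<union> prods B T)"
proof -
  let ?N = "{x + y | x y. x \<in> right_mult_set (span B) r \<and> y \<in> span B}"
  have fE: "finite (B \<union> prods B T)" using fB fT by (simp add: finite_prods)
  have N: "?N \<subseteq> span (B \<union> prods B T)"
  proof
    fix z assume "z \<in> ?N"
    then obtain w y where wy: "w \<in> span B" "y \<in> span B" "z = w * r + y"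
      unfolding right_mult_set_def by blast
    have "w * r \<in> span (prods B T)" using prod_span[OF wy(1) r] .
    then have "w * r \<in> span (B \<union> prods B T)" using span_mono[of "prods B T" "B \<union> prods B T"] by blast
    moreover have "y \<in> span (B \<union> prods B T)" using wy(2) span_mono[of B "B \<union> prods B T"] by blast
    ultimately show "z \<in> span (B \<union> prods B T)" using wy(3) span_add by simp
  qed
  show "dim ?N \<le> dim (B \<union> prods B T)" using dim_le_fin[OF fE N] .
  have "span B \<subseteq> ?N"
  proof
    fix y assume "y \<in> span B"
    moreover have "0 * r \<in> right_mult_set (span B) r" unfolding right_mult_set_def using span_zero by blast
    ultimately show "y \<in> ?N" by force
  qed
  then have "dim (span B) \<le> dim ?N" using dim_mono_gen[OF _ N fE] by blast
  then show "dim B \<le> dim ?N" by simp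
qed

lemma amen_constr:
  assumes G: "\<And>S. subalgebra scale S \<Longrightarrow> G \<subseteq> S \<Longrightarrow> S = UNIV" and fG: "finite G"
    and nzd: "\<And>x y :: 'r. x * y = 0 \<Longrightarrow> x = 0 \<or> y = 0"
    and nfd: "\<not> fd"
    and fol: "\<And>n \<epsilon>. \<epsilon> > 0 \<Longrightarrow> \<exists>X. finite X \<and> 0 < dim X \<and>
                 real (dim (X \<union> prods X (Mset G n))) < (1 + \<epsilon>) * real (dim X)"
  shows "amenable scale"
proof -
  define E where "E n X = X \<union> prods X (Mset G n)" for n X
  define eps where "eps n B = 1 / (real (Suc n) * (1 + real (dim (E n (B \<union> Mset G n)))))" for n B
  define P where "P n B X \<longleftrightarrow> finite X \<and> 0 < dim X \<and> real (dim (E n X)) < (1 + eps n B) * real (dim X)" for n B X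
  define FX where "FX n B = (SOME X. P n B X)" for n B
  have eps_pos: "eps n B > 0" for n B unfolding eps_def by simp
  have FX: "P n B (FX n B)" for n B
    unfolding FX_def by (rule someI_ex) (use fol[OF eps_pos[of n B]] in \<open>auto simp: P_def E_def\<close>)
  define Bs where "Bs = rec_nat {} (\<lambda>n B. FX n B \<union> B \<union> Mset G n)"
  have Bs0: "Bs 0 = {}" and BsS: "Bs (Suc n) = FX n (Bs n) \<union> Bs n \<union> Mset G n" for n
    unfolding Bs_def by simp_all
  have fBs: "finite (Bs n)" for n
    by (induction n) (use FX fG finite_Mset in \<open>auto simp: Bs0 BsS P_def\<close>)
  have fE: "finite (E n X)" if "finite X" for n X
    using that finite_Mset[OF fG] unfolding E_def by (simp add: finite_prods)
  have key: "real (dim (E n (Bs (Suc n)))) \<le> (1 + 1 / real (Suc n)) * real (dim (Bs (Suc n)))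
             \<and> 0 < dim (Bs (Suc n))" for n
  proof -
    define X where "X = FX n (Bs n)"
    define U where "U = Bs n \<union> Mset G n"
    define ep where "ep = eps n (Bs n)"
    define c where "c = real (dim (E n U))"
    define d where "d = real (dim (Bs (Suc n)))"
    have PX: "finite X" "0 < dim X" "real (dim (E n X)) < (1 + ep) * real (dim X)"
      using FX[of n "Bs n"] unfolding P_def X_def ep_def by auto
    have fU: "finite U" unfolding U_def using fBs fG finite_Mset by simp
    have BXU: "Bs (Suc n) = X \<union> U" unfolding X_def U_def BsS by auto
    have "E n (Bs (Suc n)) = E n X \<union> E n U" unfolding BXU E_def prods_Un1 by auto
    then have "dim (E n (Bs (Suc n))) \<le> dim (E n X) + dim (E n U)"
      using dim_union_le[OF fE[OF PX(1)] fE[OF fU]] by simp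
    then have e1: "real (dim (E n (Bs (Suc n)))) \<le> real (dim (E n X)) + c" unfolding c_def by linarith
    have "dim X + 1 \<le> dim (E n X)" unfolding E_def
      by (rule expand_one[OF G nzd nfd G_Mset PX(1) finite_Mset[OF fG] PX(2)])
    then have e2: "real (dim X) + 1 \<le> real (dim (E n X))" by linarith
    have "dim X \<le> dim (Bs (Suc n))" using dim_sub_fin[OF fBs] BXU by blast
    then have e3: "real (dim X) \<le> d" unfolding d_def by linarith
    have c0: "0 \<le> c" unfolding c_def by simp
    have ep': "ep = 1 / (real (Suc n) * (1 + c))" unfolding ep_def eps_def c_def U_def by simp
    have c1: "1 + c \<noteq> 0" using c0 by linarith
    have ep_eq: "ep * (1 + c) = 1 / real (Suc n)" unfolding ep' using c1 by (simp add: divide_simps)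
    have dX: "0 < real (dim X)" using PX(2) by simp
    have epX: "1 < ep * real (dim X)" using e2 PX(3) by (simp add: algebra_simps)
    have "c \<le> c * (ep * real (dim X))" using epX c0 by (simp add: mult_le_cancel_left1)
    also have "\<dots> \<le> c * (ep * d)" using e3 c0 eps_pos[of n "Bs n"] unfolding ep_def
      by (intro mult_left_mono) auto
    finally have cb: "c \<le> c * ep * d" by (simp add: mult.assoc)
    have "real (dim (E n (Bs (Suc n)))) < (1 + ep) * real (dim X) + c" using e1 PX(3) by linarith
    also have "\<dots> \<le> (1 + ep) * d + c * ep * d"
      using e3 cb eps_pos[of n "Bs n"] unfolding ep_def by (intro add_mono mult_left_mono) auto
    also have "\<dots> = (1 + ep * (1 + c)) * d" by (simp add: algebra_simps)
    finally have "real (dim (E n (Bs (Suc n)))) \<le> (1 + 1 / real (Suc n)) * d" using ep_eq by simp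
    then show ?thesis using e3 dX unfolding d_def by simp
  qed
  define W where "W n = span (Bs n)" for n
  have Wsub: "W n \<subseteq> W (Suc n)" for n unfolding W_def BsS by (rule span_mono) auto
  have Wall: "(\<Union>n. W n) = UNIV"
  proof -
    have "r \<in> (\<Union>n. W n)" for r
    proof -
      obtain n where "r \<in> span (Mset G n)" using Mset_exhaust[OF G] by blast
      then have "r \<in> W (Suc n)" unfolding W_def BsS using span_mono[of "Mset G n"] by blast
      then show ?thesis by blast
    qed
    then show ?thesis by blast
  qed
  have lim: "(\<lambda>n. real (dim {x + y | x y. x \<in> right_mult_set (W n) r \<and> y \<in> W n}) / real (dim (W n)))
             \<longlonglongrightarrow> 1" for r
  proof -
    obtain k where k: "r \<in> span (Mset G k)" using Mset_exhaust[OF G] by blast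
    define f where "f n = real (dim {x + y | x y. x \<in> right_mult_set (W n) r \<and> y \<in> W n}) / real (dim (W n))" for n
    have bnd: "1 \<le> f n \<and> f n \<le> 1 + inverse (real n)" if nk: "n \<ge> Suc k" for n
    proof -
      obtain m where m: "n = Suc m" "m \<ge> k" using nk by (cases n) auto
      have rm: "r \<in> span (Mset G m)" using k Mset_mono[OF m(2)] span_mono by blast
      have kk: "real (dim (E m (Bs (Suc m)))) \<le> (1 + 1 / real (Suc m)) * real (dim (Bs (Suc m)))"
        "0 < dim (Bs (Suc m))" using key[of m] by auto
      note rb = ratio_bounds[OF fBs kk(2) rm finite_Mset[OF fG]]
      have dpos: "0 < real (dim (Bs (Suc m)))" using kk(2) by simp
      have a: "real (dim (Bs (Suc m))) \<le> real (dim {x + y | x y. x \<in> right_mult_set (span (Bs (Suc m))) r \<and> y \<in> span (Bs (Suc m))})"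
        using rb(1) by linarith
      have b: "real (dim {x + y | x y. x \<in> right_mult_set (span (Bs (Suc m))) r \<and> y \<in> span (Bs (Suc m))})
          \<le> (1 + 1 / real (Suc m)) * real (dim (Bs (Suc m)))"
        using rb(2) kk(1) unfolding E_def by linarith
      have fn: "f n = real (dim {x + y | x y. x \<in> right_mult_set (span (Bs (Suc m))) r \<and> y \<in> span (Bs (Suc m))}) / real (dim (Bs (Suc m)))"
        unfolding f_def W_def m(1) by simp
      show ?thesis unfolding fn using a b dpos m(1)
        by (simp add: field_simps divide_simps inverse_eq_divide)
    qed
    have "(\<lambda>n. 1 + inverse (real n)) \<longlonglongrightarrow> 1 + 0"
      by (intro tendsto_add tendsto_const lim_inverse_n)
    then have up: "(\<lambda>n. 1 + inverse (real n)) \<longlonglongrightarrow> 1" by simp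
    have "f \<longlonglongrightarrow> 1"
    proof (rule tendsto_sandwich[OF _ _ tendsto_const up])
      show "\<forall>\<^sub>F n in sequentially. 1 \<le> f n" using bnd unfolding eventually_sequentially by blast
      show "\<forall>\<^sub>F n in sequentially. f n \<le> 1 + inverse (real n)" using bnd unfolding eventually_sequentially by blast
    qed
    then show ?thesis unfolding f_def .
  qed
  have "\<forall>n. subspace (W n) \<and> (\<exists>B. finite B \<and> span B = W n)" using fBs unfolding W_def by blast
  then show ?thesis
    unfolding amenable_def using Wsub Wall lim by blast
qed

lemma expansion_double:
  assumes fT: "finite T" and ep: "\<epsilon> > 0"
    and exp: "\<And>X. finite X \<Longrightarrow> 0 < dim X \<Longrightarrow> (1 + \<epsilon>) * real (dim X) \<le> real (dim (X \<union> prods X T))"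
  shows "\<exists>S. finite S \<and> 0 \<notin> S \<and> (\<forall>A. finite A \<longrightarrow> independent A \<longrightarrow> 2 * card A \<le> dim (prods A S))"
proof -
  let ?e = "\<lambda>Y. Y \<union> prods Y T"
  have exp': "(1 + \<epsilon>) * real (dim X) \<le> real (dim (?e X))" if "finite X" for X
    using exp[OF that] by (cases "dim X = 0") auto
  have fe: "finite ((?e ^^ j) X)" if "finite X" for j X
    by (induction j) (use that fT in \<open>auto simp: finite_prods\<close>)
  have it: "(1 + \<epsilon>) ^ j * real (dim X) \<le> real (dim ((?e ^^ j) X))" if fX: "finite X" for j X
  proof (induction j)
    case 0 then show ?case by simp
  next
    case (Suc j)
    have "(1 + \<epsilon>) ^ Suc j * real (dim X) = (1 + \<epsilon>) * ((1 + \<epsilon>) ^ j * real (dim X))" by simp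
    also have "\<dots> \<le> (1 + \<epsilon>) * real (dim ((?e ^^ j) X))" using Suc ep by (intro mult_left_mono) auto
    also have "\<dots> \<le> real (dim (?e ((?e ^^ j) X)))" using exp'[OF fe[OF fX]] .
    finally show ?case by simp
  qed
  obtain j where j: "3 < (1 + \<epsilon>) ^ j" using real_arch_pow[of "1 + \<epsilon>" 3] ep by auto
  define S where "S = Sq T j - {0}"
  have fS: "finite S" unfolding S_def using finite_Sq[OF fT] by simp
  have "2 * card A \<le> dim (prods A S)" if A: "finite A" "independent A" for A
  proof -
    have dA: "dim A = card A" using dim_eq_card_independent[OF A(2)] .
    have fAS: "finite (prods A (Sq T j))" using A(1) finite_Sq[OF fT] by (simp add: finite_prods)
    have "3 * real (card A) \<le> (1 + \<epsilon>) ^ j * real (card A)" using j by (intro mult_right_mono) auto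
    also have "\<dots> = (1 + \<epsilon>) ^ j * real (dim A)" using dA by simp
    also have "\<dots> \<le> real (dim ((?e ^^ j) A))" using it[OF A(1)] .
    also have "\<dots> \<le> real (dim (A \<union> prods A (Sq T j)))"
      using dim_sub_fin[OF _ iter_sub[where T=T and j=j and X=A]] A(1) fAS by simp
    also have "\<dots> \<le> real (dim A + dim (prods A (Sq T j)))"
      using dim_union_le[OF A(1) fAS] by linarith
    finally have "2 * card A \<le> dim (prods A (Sq T j))" using dA by simp
    moreover have "dim (prods A (Sq T j)) \<le> dim (insert 0 (prods A S))"
    proof (rule dim_sub_fin)
      show "finite (insert 0 (prods A S))" using A(1) fS by (simp add: finite_prods)
      show "prods A (Sq T j) \<subseteq> insert 0 (prods A S)"
      proof
        fix z assume "z \<in> prods A (Sq T j)"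
        then obtain a t where at: "a \<in> A" "t \<in> Sq T j" "z = a * t" unfolding prods_def by blast
        show "z \<in> insert 0 (prods A S)"
        proof (cases "t = 0")
          case True then show ?thesis using at by simp
        next
          case False then have "z \<in> prods A S" using at unfolding prods_def S_def by blast
          then show ?thesis by simp
        qed
      qed
    qed
    moreover have "dim (insert 0 (prods A S)) = dim (prods A S)" by (rule span_eq_dim) simp
    ultimately show ?thesis by simp
  qed
  then show ?thesis using fS unfolding S_def by blast
qed

lemma paradox_from_double:
  assumes fS: "finite S" and S0: "0 \<notin> S"
    and dbl: "\<And>A. finite A \<Longrightarrow> independent A \<Longrightarrow> 2 * card A \<le> dim (prods A S)"
    and F: "independent F" and cF: "countable F"
  shows "\<exists>(m::nat) (A :: nat \<Rightarrow> 'r set) (g :: nat \<Rightarrow> 'r) (h :: nat \<Rightarrow> 'r).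
           F = (\<Union>i<m. A i) \<and>
           (\<forall>i<m. \<forall>j<m. i \<noteq> j \<longrightarrow> A i \<inter> A j = {}) \<and>
           (\<forall>i<m. g i \<noteq> 0 \<and> h i \<noteq> 0) \<and>
           mutually_independent scale ({..<m} \<times> UNIV)
             (\<lambda>(i, b). if b then right_mult_set (A i) (g i) else right_mult_set (A i) (h i))"
proof -
  define I where "I = F \<times> (UNIV :: bool set)"
  define X where "X p = (\<lambda>s. fst p * s) ` S" for p :: "'r \<times> bool"
  have cI: "countable I" unfolding I_def using cF by auto
  have finX: "finite (X p)" for p unfolding X_def using fS by simp
  have H: "hallc scale I X"
    unfolding hallc_def
  proof (intro allI impI)
    fix J assume J: "J \<subseteq> I" "finite J"
    define A where "A = fst ` J"
    have fA: "finite A" unfolding A_def using J(2) by simp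
    have "A \<subseteq> F" using J(1) unfolding A_def I_def by auto
    then have iA: "independent A" using independent_mono[OF F] by blast
    have "J \<subseteq> A \<times> (UNIV :: bool set)" unfolding A_def by force
    then have "card J \<le> card (A \<times> (UNIV :: bool set))" using fA by (intro card_mono) auto
    also have "\<dots> = 2 * card A" using fA by (simp add: card_cartesian_product)
    also have "\<dots> \<le> dim (prods A S)" using dbl[OF fA iA] .
    also have "prods A S = \<Union>(X ` J)"
      unfolding prods_def X_def A_def by force
    finally show "card J \<le> dim (\<Union>(X ` J))" .
  qed
  obtain x where x: "\<forall>p\<in>I. x p \<in> X p" "inj_on x I" "independent (x ` I)"
    using rado_countable[OF cI H] finX by blast
  define sel where "sel f b = (SOME s. s \<in> S \<and> x (f, b) = f * s)" for f b
  have sel: "sel f b \<in> S \<and> x (f, b) = f * sel f b" if "f \<in> F" for f b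
  proof -
    have "x (f, b) \<in> X (f, b)" using x(1) that unfolding I_def by auto
    then have "\<exists>s. s \<in> S \<and> x (f, b) = f * s" unfolding X_def by auto
    then show ?thesis unfolding sel_def by (rule someI_ex)
  qed
  define PS where "PS = S \<times> S"
  define m where "m = card PS"
  have fPS: "finite PS" unfolding PS_def using fS by simp
  obtain p where p: "bij_betw p {0..<m} PS" using ex_bij_betw_nat_finite[OF fPS] unfolding m_def by blast
  have p': "bij_betw p {..<m} PS" using p by (simp add: atLeast0LessThan)
  define A where "A i = {f \<in> F. (sel f True, sel f False) = p i}" for i
  define g where "g i = fst (p i)" for i
  define h where "h i = snd (p i)" for i
  have c1: "F = (\<Union>i<m. A i)"
  proof
    show "F \<subseteq> (\<Union>i<m. A i)"
    proof
      fix f assume f: "f \<in> F"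
      have "(sel f True, sel f False) \<in> PS" using sel[OF f] unfolding PS_def by auto
      then obtain i where "i < m" "p i = (sel f True, sel f False)"
        using p' unfolding bij_betw_def by (metis imageE lessThan_iff)
      then show "f \<in> (\<Union>i<m. A i)" unfolding A_def using f by force
    qed
    show "(\<Union>i<m. A i) \<subseteq> F" unfolding A_def by auto
  qed
  have c2: "\<forall>i<m. \<forall>j<m. i \<noteq> j \<longrightarrow> A i \<inter> A j = {}"
  proof (intro allI impI)
    fix i j assume ij: "i < m" "j < m" "i \<noteq> j"
    have "p i \<noteq> p j" using p' ij unfolding bij_betw_def inj_on_def by auto
    then show "A i \<inter> A j = {}" unfolding A_def by auto
  qed
  have c3: "\<forall>i<m. g i \<noteq> 0 \<and> h i \<noteq> 0"
  proof (intro allI impI)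
    fix i assume "i < m"
    then have "p i \<in> PS" using p' unfolding bij_betw_def by auto
    then show "g i \<noteq> 0 \<and> h i \<noteq> 0" unfolding g_def h_def PS_def using S0 by auto
  qed
  define B where "B = (\<lambda>(i, b). if b then right_mult_set (A i) (g i) else right_mult_set (A i) (h i))"
  have Beq: "B (i, b) = (\<lambda>f. x (f, b)) ` A i" for i b
  proof -
    have "f * g i = x (f, True)" "f * h i = x (f, False)" if "f \<in> A i" for f
      using that sel[of f True] sel[of f False] unfolding A_def g_def h_def
      by (auto simp: prod_eq_iff)
    then show ?thesis unfolding B_def right_mult_set_def by (cases b) (auto simp: image_def)
  qed
  have AF: "A i \<subseteq> F" for i unfolding A_def by auto
  have c4: "mutually_independent scale ({..<m} \<times> UNIV) B"
    unfolding mutually_independent_def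
  proof
    show "\<forall>u\<in>{..<m} \<times> UNIV. \<forall>v\<in>{..<m} \<times> UNIV. u \<noteq> v \<longrightarrow> B u \<inter> B v = {}"
    proof (intro ballI impI)
      fix u v assume u: "u \<in> {..<m} \<times> (UNIV :: bool set)" and v: "v \<in> {..<m} \<times> (UNIV :: bool set)" and uv: "u \<noteq> v"
      obtain i b where ib: "u = (i, b)" by (cases u)
      obtain j c where jc: "v = (j, c)" by (cases v)
      show "B u \<inter> B v = {}"
      proof (rule ccontr)
        assume "B u \<inter> B v \<noteq> {}"
        then obtain f f' where ff: "f \<in> A i" "f' \<in> A j" "x (f, b) = x (f', c)"
          unfolding ib jc Beq by auto
        have "(f, b) \<in> I" "(f', c) \<in> I" using ff AF unfolding I_def by auto
        then have "(f, b) = (f', c)" using x(2) ff(3) unfolding inj_on_def by blast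
        then have "f = f'" "b = c" by auto
        then have "i = j" using c2 ff u v unfolding ib jc by blast
        then show False using uv ib jc \<open>b = c\<close> by simp
      qed
    qed
    have "(\<Union>u\<in>{..<m} \<times> UNIV. B u) \<subseteq> x ` I"
    proof
      fix z assume "z \<in> (\<Union>u\<in>{..<m} \<times> UNIV. B u)"
      then obtain i b where "z \<in> B (i, b)" by auto
      then obtain f where "f \<in> A i" "z = x (f, b)" unfolding Beq by auto
      then show "z \<in> x ` I" using AF unfolding I_def by auto
    qed
    then show "independent (\<Union>u\<in>{..<m} \<times> UNIV. B u)" using independent_mono[OF x(3)] by blast
  qed
  show ?thesis
    apply (rule exI[of _ m], rule exI[of _ A], rule exI[of _ g], rule exI[of _ h])
    using c1 c2 c3 c4 unfolding B_def by blast
qed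

end



theorem proposition2:
  fixes scale :: "'k::field \<Rightarrow> 'r::ring \<Rightarrow> 'r"
  assumes "affine_algebra scale"
    and "no_zero_divisors_alg TYPE('r)"
    and "\<not> amenable scale"
  shows "paradoxical scale"
proof -
  have alg: "algebra_over scale" and "\<exists>G. finite G \<and> (\<forall>S. subalgebra scale S \<and> G \<subseteq> S \<longrightarrow> S = UNIV)"
    using assms(1) unfolding affine_algebra_def by auto
  then obtain G where fG: "finite G" and G: "\<And>S. subalgebra scale S \<Longrightarrow> G \<subseteq> S \<Longrightarrow> S = UNIV" by blast
  interpret alg scale
    using alg unfolding algebra_over_def alg_def alg_axioms_def by blast
  have nzd: "\<And>x y :: 'r. x * y = 0 \<Longrightarrow> x = 0 \<or> y = 0"
    using assms(2) unfolding no_zero_divisors_alg_def by blast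
  show ?thesis
  proof (cases fd)
    case True
    then obtain B where fB: "finite B" and B: "span B = UNIV" unfolding fd_def by blast
    show ?thesis
    proof (cases "\<exists>z::'r. z \<noteq> 0")
      case False
      then have all0: "\<And>z::'r. z = 0" by blast
      show ?thesis unfolding paradoxical_def
      proof (intro allI impI)
        fix F :: "'r set" assume "independent F \<and> span F = UNIV"
        then have "0 \<notin> F" using dependent_zero by blast
        then have "F = {}" using all0 by (metis ex_in_conv)
        then show "\<exists>(m::nat) (A :: nat \<Rightarrow> 'r set) (g :: nat \<Rightarrow> 'r) (h :: nat \<Rightarrow> 'r).
           F = (\<Union>i<m. A i) \<and>
           (\<forall>i<m. \<forall>j<m. i \<noteq> j \<longrightarrow> A i \<inter> A j = {}) \<and>
           (\<forall>i<m. g i \<noteq> 0 \<and> h i \<noteq> 0) \<and>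
           mutually_independent scale ({..<m} \<times> UNIV)
             (\<lambda>(i, b). if b then right_mult_set (A i) (g i) else right_mult_set (A i) (h i))"
          using independent_empty by (intro exI[of _ 0]) (auto simp: mutually_independent_def)
      qed
    next
      case True
      then obtain z :: 'r where z: "z \<noteq> 0" by blast
      have "dim {z} = 1" using dim_eq_card_independent[of "{z}"] z by simp
      moreover have "dim {z} \<le> dim (UNIV :: 'r set)" using dim_mono_gen[of "{z}" UNIV B] fB B by simp
      ultimately have d: "0 < dim (UNIV :: 'r set)" by simp
      have N: "{x + y | x y. x \<in> right_mult_set UNIV r \<and> y \<in> (UNIV :: 'r set)} = UNIV" for r
      proof -
        have "w \<in> {x + y | x y. x \<in> right_mult_set UNIV r \<and> y \<in> (UNIV :: 'r set)}" for w
          unfolding right_mult_set_def by (rule CollectI, rule exI[of _ "0 * r"], rule exI[of _ w]) (auto intro: image_eqI[of _ _ 0])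
        then show ?thesis by blast
      qed
      have lim: "(\<lambda>n. real (dim {x + y | x y. x \<in> right_mult_set UNIV r \<and> y \<in> (UNIV :: 'r set)}) / real (dim (UNIV :: 'r set))) \<longlonglongrightarrow> 1" for r
        unfolding N using d by simp
      have "amenable scale"
        unfolding amenable_def
        apply (rule exI[of _ "\<lambda>n. UNIV"])
        using fB B lim subspace_UNIV by blast
      then show ?thesis using assms(3) by simp
    qed
  next
    case False
    have "\<not> (\<forall>n \<epsilon>. \<epsilon> > 0 \<longrightarrow> (\<exists>X. finite X \<and> 0 < dim X \<and>
                 real (dim (X \<union> prods X (Mset G n))) < (1 + \<epsilon>) * real (dim X)))"
      using amen_constr[OF G fG nzd False] assms(3) by blast
    then obtain n \<epsilon> where ep: "\<epsilon> > 0" and nex: "\<not> (\<exists>X. finite X \<and> 0 < dim X \<and>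
                 real (dim (X \<union> prods X (Mset G n))) < (1 + \<epsilon>) * real (dim X))"
      by blast
    have ex: "(1 + \<epsilon>) * real (dim X) \<le> real (dim (X \<union> prods X (Mset G n)))"
      if "finite X" "0 < dim X" for X
    proof -
      have "\<not> real (dim (X \<union> prods X (Mset G n))) < (1 + \<epsilon>) * real (dim X)" using nex that by blast
      then show ?thesis by simp
    qed
    obtain S where S: "finite S" "0 \<notin> S"
      "\<And>A. finite A \<Longrightarrow> independent A \<Longrightarrow> 2 * card A \<le> dim (prods A S)"
      using expansion_double[OF finite_Mset[OF fG] ep ex] by blast
    show ?thesis unfolding paradoxical_def
    proof (intro allI impI)
      fix F :: "'r set" assume F: "independent F \<and> span F = UNIV"
      have "F = (\<Union>k. F \<inter> span (Mset G k))" using Mset_exhaust[OF G] by blast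
      moreover have "finite (F \<inter> span (Mset G k))" for k
        using independent_span_bound[OF finite_Mset[OF fG], of "F \<inter> span (Mset G k)"]
          independent_mono[of F] F by blast
      ultimately have cF: "countable F" by (metis countable_UN countable_finite UNIV_I countableI_type)
      show "\<exists>(m::nat) (A :: nat \<Rightarrow> 'r set) (g :: nat \<Rightarrow> 'r) (h :: nat \<Rightarrow> 'r).
           F = (\<Union>i<m. A i) \<and>
           (\<forall>i<m. \<forall>j<m. i \<noteq> j \<longrightarrow> A i \<inter> A j = {}) \<and>
           (\<forall>i<m. g i \<noteq> 0 \<and> h i \<noteq> 0) \<and>
           mutually_independent scale ({..<m} \<times> UNIV)
             (\<lambda>(i, b). if b then right_mult_set (A i) (g i) else right_mult_set (A i) (h i))"
        using paradox_from_double[OF S(1,2) S(3)] F cF by blast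
    qed
  qed
qed


end
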